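(* Let $\mathcal{T}\subset\mathbb{R}^3$ be a conforming tetrahedral mesh that is 4-colorable, fix a 4-coloring of its vertices with colors $A,B,C,D$, fix time-slices $s_0<s_1<\dots<s_M$, and let $\mathcal{T}'\subset\mathbb{R}^4$ be the pentatope mesh produced from $\mathcal{T}$ by extrusion-subdivision according to the subdivision rule described in the context. Then $\mathcal{T}'$ admits a consistent tagging.
   Context: A 4-coloring of a tetrahedral mesh assigns to each vertex one of four labels $A,B,C,D$ so that no two vertices joined by an edge of the mesh share a label; in particular every tetrahedron has exactly one vertex of each color. For $r\in\mathbb{R}$ and $v=(a_0,a_1,a_2)\in\mathbb{R}^3$ let $\psi_r(v)=(a_0,a_1,a_2,r)\in\mathbb{R}^4$. Extrusion-subdivision (subdivision rule): for each tetrahedron $T\in\mathcal{T}$ with vertices $v_A,v_B,v_C,v_D$ (subscript = color) and each $i\in\{0,\dots,M-1\}$, put $x_X=\psi_{s_i}(v_X)$ and $x_X'=\psi_{s_{i+1}}(v_X)$ for $X\in\{A,B,C,D\}$. The prism $\operatorname{conv}(\psi_{s_i}(T),\psi_{s_{i+1}}(T))$ is subdivided into the four pentatopes $\tau_1=\operatorname{conv}(x_A,x_B,x_C,x_D,x_D')$, $\tau_2=\operatorname{conv}(x_A,x_B,x_C,x_C',x_D')$, $\tau_3=\operatorname{conv}(x_A,x_B,x_B',x_C',x_D')$, $\tau_4=\operatorname{conv}(x_A,x_A',x_B',x_C',x_D')$. The mesh $\mathcal{T}'$ consists of all these pentatopes over all $T\in\mathcal{T}$ and all $i$. A tagged pentatope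 is an ordering $(x_0,x_1,x_2,x_3,x_4)$ of the vertices of a pentatope together with an integer type $\gamma\in\{0,1,2,3\}$, written $t=(x_0,x_1,x_2,x_3,x_4)_\gamma$. Bisection rule: bisecting $t=(x_0,\dots,x_4)_\gamma$ along its refinement edge $\overline{x_0x_4}$ gives the children $t_1=(x_0,x',x_1,x_2,x_3)_{\gamma'}$ and $t_2=(x_4,x',x_3,x_2,x_1)_{\gamma'}$ if $\gamma=0$, $t_2=(x_4,x',x_1,x_3,x_2)_{\gamma'}$ if $\gamma=1$, $t_2=(x_4,x',x_1,x_2,x_3)_{\gamma'}$ if $\gamma\in\{2,3\}$, where $x'=(x_0+x_4)/2$ and $\gamma'=(\gamma+1)\bmod 4$. Reflection: $t_R=(x_4,x_3,x_2,x_1,x_0)_\gamma$ if $\gamma=0$, $t_R=(x_4,x_1,x_3,x_2,x_0)_\gamma$ if $\gamma=1$, $t_R=(x_4,x_1,x_2,x_3,x_0)_\gamma$ if $\gamma\in\{2,3\}$. Two tagged pentatopes $t,t'$ are reflected neighbors if they share a common hyperface (3-dimensional face), have the same type, and the vertex order of $t'$ agrees with the vertex order of $t$ or of $t_R$ in all but one position. Two tagged pentatopes $t=(x_0,\dots,x_4)_\gamma$, $t'=(x_0',\dots,x_4')_\gamma$ of the same type sharing a hyperface are consistently tagged if: (1) when $\overline{x_0x_4}$ or $\overline{x_0'x_4'}$ is contained in the shared hyperface, $t$ and $t'$ are reflected neighbors; (2) otherwise, the child of $t$ and the child of $t'$ (under the bisection rule) that share the common hyperface are reflected neighbors. A consistent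 tagging of a mesh is a choice of tag for every pentatope of the mesh such that any two neighboring (hyperface-sharing) pentatopes are consistently tagged. *)

theory Defs
  imports "HOL-Analysis.Analysis"
begin

text \<open>Points of R^3 are of type real^3; points of R^4 are represented as real^3 \<times> real,
  the last coordinate being the time coordinate.\<close>

type_synonym pt3 = "real^3"
type_synonym pt4 = "(real^3) \<times> real"

datatype colour = cA | cB | cC | cD

definition psi :: "real \<Rightarrow> pt3 \<Rightarrow> pt4" where
  "psi r v = (v, r)"

definition conforming_tet_mesh :: "pt3 set set \<Rightarrow> bool" where
  "conforming_tet_mesh Tm \<longleftrightarrow> finite Tm \<and>
     (\<forall>T\<in>Tm. card T = 4 \<and> \<not> affine_dependent T) \<and>
     (\<forall>T1\<in>Tm. \<forall>T2\<in>Tm. convex hull T1 \<inter> convex hull T2 = convex hull (T1 \<inter> T2))"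

definition four_colouring :: "pt3 set set \<Rightarrow> (pt3 \<Rightarrow> colour) \<Rightarrow> bool" where
  "four_colouring Tm col \<longleftrightarrow>
     (\<forall>T\<in>Tm. \<forall>u\<in>T. \<forall>v\<in>T. u \<noteq> v \<longrightarrow> col u \<noteq> col v)"

definition vtx :: "(pt3 \<Rightarrow> colour) \<Rightarrow> pt3 set \<Rightarrow> colour \<Rightarrow> pt3" where
  "vtx col T X = (THE v. v \<in> T \<and> col v = X)"

definition extrusion_subdivision ::
  "pt3 set set \<Rightarrow> (pt3 \<Rightarrow> colour) \<Rightarrow> (nat \<Rightarrow> real) \<Rightarrow> nat \<Rightarrow> pt4 set set" where
  "extrusion_subdivision Tm col s M =
     (\<Union>T\<in>Tm. \<Union>i\<in>{..<M}.
        (let x = (\<lambda>X. psi (s i) (vtx col T X));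
             x' = (\<lambda>X. psi (s (Suc i)) (vtx col T X))
         in { {x cA, x cB, x cC, x cD, x' cD},
              {x cA, x cB, x cC, x' cC, x' cD},
              {x cA, x cB, x' cB, x' cC, x' cD},
              {x cA, x' cA, x' cB, x' cC, x' cD} }))"

text \<open>Tagged pentatopes: a vertex ordering (list of length 5) together with a type.\<close>

type_synonym tagged = "pt4 list \<times> nat"

definition bisect_children :: "tagged \<Rightarrow> tagged set" where
  "bisect_children t = (let xs = fst t; g = snd t;
       x0 = xs!0; x1 = xs!1; x2 = xs!2; x3 = xs!3; x4 = xs!4;
       xm = (1/2) *\<^sub>R (x0 + x4); g' = (g + 1) mod 4;
       t1 = ([x0, xm, x1, x2, x3], g');
       t2 = (if g = 0 then ([x4, xm, x3, x2, x1], g')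
             else if g = 1 then ([x4, xm, x1, x3, x2], g')
             else ([x4, xm, x1, x2, x3], g'))
     in {t1, t2})"

definition reflect :: "tagged \<Rightarrow> tagged" where
  "reflect t = (let xs = fst t; g = snd t in
     if g = 0 then ([xs!4, xs!3, xs!2, xs!1, xs!0], g)
     else if g = 1 then ([xs!4, xs!1, xs!3, xs!2, xs!0], g)
     else ([xs!4, xs!1, xs!2, xs!3, xs!0], g))"

definition agree_but_one :: "'a list \<Rightarrow> 'a list \<Rightarrow> bool" where
  "agree_but_one xs ys \<longleftrightarrow> length xs = length ys \<and>
     (\<exists>i<length xs. \<forall>j<length xs. j \<noteq> i \<longrightarrow> xs!j = ys!j)"

definition share_hyperface :: "tagged \<Rightarrow> tagged \<Rightarrow> bool" where
  "share_hyperface t t' \<longleftrightarrow> card (set (fst t) \<inter> set (fst t')) = 4"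

definition reflected_neighbors :: "tagged \<Rightarrow> tagged \<Rightarrow> bool" where
  "reflected_neighbors t t' \<longleftrightarrow> share_hyperface t t' \<and> snd t = snd t' \<and>
     (agree_but_one (fst t) (fst t') \<or> agree_but_one (fst (reflect t)) (fst t'))"

definition consistently_tagged :: "tagged \<Rightarrow> tagged \<Rightarrow> bool" where
  "consistently_tagged t t' \<longleftrightarrow> snd t = snd t' \<and> share_hyperface t t' \<and>
     (let F = set (fst t) \<inter> set (fst t') in
      if {fst t ! 0, fst t ! 4} \<subseteq> F \<or> {fst t' ! 0, fst t' ! 4} \<subseteq> F
      then reflected_neighbors t t'
      else (\<exists>c\<in>bisect_children t. \<exists>c'\<in>bisect_children t'.
              F \<subseteq> set (fst c) \<and> F \<subseteq> set (fst c') \<and> reflected_neighbors c c'))"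

definition is_tag :: "pt4 set \<Rightarrow> tagged \<Rightarrow> bool" where
  "is_tag P t \<longleftrightarrow> length (fst t) = 5 \<and> distinct (fst t) \<and> set (fst t) = P \<and> snd t < 4"

definition consistent_tagging :: "pt4 set set \<Rightarrow> (pt4 set \<Rightarrow> tagged) \<Rightarrow> bool" where
  "consistent_tagging Pm tg \<longleftrightarrow>
     (\<forall>P\<in>Pm. is_tag P (tg P)) \<and>
     (\<forall>P\<in>Pm. \<forall>Q\<in>Pm. P \<noteq> Q \<and> card (P \<inter> Q) = 4 \<longrightarrow> consistently_tagged (tg P) (tg Q))"

end

theory Submission
  imports Defs
begin

definition cidx :: "nat \<Rightarrow> colour" where
  "cidx j = [cD, cC, cB, cA] ! (j mod 4)"

definition wpt :: "(pt3 \<Rightarrow> colour) \<Rightarrow> (nat \<Rightarrow> real) \<Rightarrow> pt3 set \<Rightarrow> nat \<Rightarrow> pt4" where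
  "wpt col s T j = psi (s (j div 4)) (vtx col T (cidx j))"

definition win :: "(pt3 \<Rightarrow> colour) \<Rightarrow> (nat \<Rightarrow> real) \<Rightarrow> pt3 set \<Rightarrow> nat \<Rightarrow> pt4 list" where
  "win col s T n = [wpt col s T n, wpt col s T (n+1), wpt col s T (n+2), wpt col s T (n+3), wpt col s T (n+4)]"

lemma mod4_cases: "(j::nat) mod 4 = 0 \<or> j mod 4 = 1 \<or> j mod 4 = 2 \<or> j mod 4 = 3"
  by arith

lemma cidx_inj: "cidx j = cidx j' \<Longrightarrow> j mod 4 = j' mod 4"
  using mod4_cases[of j] mod4_cases[of j'] by (auto simp: cidx_def)

lemma cidx_add4: "cidx (n + 4) = cidx n"
  by (simp add: cidx_def)

lemma cidx_Suc: "cidx (Suc n) \<noteq> cidx n"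
  using mod4_cases[of n] by (auto simp: cidx_def mod_Suc)

lemma cidx_surj: "\<exists>j. Suc n \<le> j \<and> j \<le> n + 4 \<and> cidx j = c"
proof -
  obtain r where r: "r < 4" "[cD, cC, cB, cA] ! r = c"
  proof (cases c)
    case cA then show ?thesis by (intro that[of 3]) simp_all
  next
    case cB then show ?thesis by (intro that[of 2]) simp_all
  next
    case cC then show ?thesis by (intro that[of 1]) simp_all
  next
    case cD then show ?thesis by (intro that[of 0]) simp_all
  qed
  define j where "j = n + 1 + (r + 4 - (n+1) mod 4) mod 4"
  have q: "(n+1) mod 4 < 4" by simp
  have key: "q < 4 \<Longrightarrow> r < 4 \<Longrightarrow> (q + (r + 4 - q) mod 4) mod 4 = r" for q r :: nat
  proof -
    assume "q < 4" "r < 4"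
    then have "q \<in> {0,1,2,3}" "r \<in> {0,1,2,3}" by auto
    then show ?thesis by auto
  qed
  have "j mod 4 = ((n+1) mod 4 + (r + 4 - (n+1) mod 4) mod 4) mod 4"
    unfolding j_def by (simp add: mod_add_left_eq)
  then have "j mod 4 = r" using key[OF q r(1)] by simp
  then have "cidx j = c" using r(2) by (simp add: cidx_def)
  moreover have "Suc n \<le> j" "j \<le> n + 4" unfolding j_def by simp_all
  ultimately show ?thesis by blast
qed

lemma colour_UNIV: "(UNIV :: colour set) = {cA, cB, cC, cD}"
proof -
  have "x \<in> {cA, cB, cC, cD}" for x by (cases x) auto
  then show ?thesis by auto
qed

lemma vtx_props:
  assumes "conforming_tet_mesh Tm" "four_colouring Tm col" "T \<in> Tm"
  shows "vtx col T c \<in> T \<and> col (vtx col T c) = c"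
proof -
  have c4: "card T = 4" using assms unfolding conforming_tet_mesh_def by auto
  have inj: "inj_on col T" using assms(2,3) unfolding four_colouring_def inj_on_def by blast
  have "card (col ` T) = 4" using c4 inj by (simp add: card_image)
  moreover have "card (UNIV :: colour set) = 4" by (simp add: colour_UNIV)
  moreover have fin: "finite (UNIV::colour set)" by (simp add: colour_UNIV)
  ultimately have "col ` T = UNIV" using card_subset_eq[OF fin subset_UNIV, of "col ` T"] by simp
  then obtain v where v: "v \<in> T" "col v = c" by (metis UNIV_I imageE)
  have "\<exists>!v. v \<in> T \<and> col v = c" using v inj by (auto dest: inj_onD)
  then show ?thesis unfolding vtx_def by (rule theI') 
qed

lemma s_mono:
  assumes "\<forall>i<M. s i < s (Suc i)" "i < l" "l \<le> M"
  shows "s i < (s l :: real)"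
  using assms(2,3)
proof (induction l)
  case 0 then show ?case by simp
next
  case (Suc l)
  have step: "s l < s (Suc l)" using assms(1) Suc.prems(2) by simp
  show ?case
  proof (cases "i < l")
    case True
    then have "s i < s l" using Suc.IH Suc.prems(2) by simp
    then show ?thesis using step by linarith
  next
    case False
    then have "i = l" using Suc.prems(1) by simp
    then show ?thesis using step by simp
  qed
qed

lemma s_inj:
  assumes "\<forall>i<M. s i < s (Suc i)" "i \<le> M" "l \<le> M" "s i = (s l :: real)"
  shows "i = l"
proof (rule ccontr)
  assume "i \<noteq> l"
  then have "i < l \<or> l < i" by linarith
  then show False using s_mono[OF assms(1), of i l] s_mono[OF assms(1), of l i] assms(2-4) by auto
qed

lemma wpt_inj:
  assumes "\<forall>i<M. s i < s (Suc i)" "\<forall>c. col (vtx col T c) = c" "\<forall>c. col (vtx col T' c) = c"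
    "j div 4 \<le> M" "j' div 4 \<le> M" "wpt col s T j = wpt col s T' j'"
  shows "j = j'"
proof -
  have 1: "s (j div 4) = s (j' div 4)" and 2: "vtx col T (cidx j) = vtx col T' (cidx j')"
    using assms(6) by (auto simp: wpt_def psi_def)
  have "j div 4 = j' div 4" using s_inj[OF assms(1) assms(4,5) 1] .
  moreover have "j mod 4 = j' mod 4" using 2 assms(2,3) cidx_inj by metis
  ultimately show ?thesis by (metis div_mult_mod_eq)
qed


lemma div4: "(4 * i + k) div 4 = i + k div (4::nat)" by simp
lemma mod4: "(4 * i + k) mod 4 = k mod (4::nat)" by simp

lemma wpt4: "wpt col s T (4 * i + k) = psi (s (i + k div 4)) (vtx col T ([cD, cC, cB, cA] ! (k mod 4)))"
  by (simp add: wpt_def cidx_def)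

lemma win4: "win col s T (4 * i + k) = [wpt col s T (4 * i + k), wpt col s T (4 * i + (k+1)),
   wpt col s T (4 * i + (k+2)), wpt col s T (4 * i + (k+3)), wpt col s T (4 * i + (k+4))]"
  by (simp add: win_def add.assoc)

lemma mesh_cases:
  assumes "P \<in> extrusion_subdivision Tm col s M"
  shows "\<exists>T\<in>Tm. \<exists>i\<in>{..<M}. P = {psi (s i) (vtx col T cA), psi (s i) (vtx col T cB), psi (s i) (vtx col T cC), psi (s i) (vtx col T cD), psi (s (Suc i)) (vtx col T cD)} \<or>
      P = {psi (s i) (vtx col T cA), psi (s i) (vtx col T cB), psi (s i) (vtx col T cC), psi (s (Suc i)) (vtx col T cC), psi (s (Suc i)) (vtx col T cD)} \<or>
      P = {psi (s i) (vtx col T cA), psi (s i) (vtx col T cB), psi (s (Suc i)) (vtx col T cB), psi (s (Suc i)) (vtx col T cC), psi (s (Suc i)) (vtx col T cD)} \<or>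
      P = {psi (s i) (vtx col T cA), psi (s (Suc i)) (vtx col T cA), psi (s (Suc i)) (vtx col T cB), psi (s (Suc i)) (vtx col T cC), psi (s (Suc i)) (vtx col T cD)} \<or> False"
  using assms unfolding extrusion_subdivision_def Let_def by (simp only: UN_iff insert_iff empty_iff)

lemma mesh_win:
  assumes "P \<in> extrusion_subdivision Tm col s M"
  shows "\<exists>T\<in>Tm. \<exists>n<4*M. P = set (win col s T n)"
proof -
  from mesh_cases[OF assms] obtain T where T1: "T \<in> Tm" and
    Ex: "\<exists>i\<in>{..<M}. P = {psi (s i) (vtx col T cA), psi (s i) (vtx col T cB), psi (s i) (vtx col T cC), psi (s i) (vtx col T cD), psi (s (Suc i)) (vtx col T cD)} \<or>
      P = {psi (s i) (vtx col T cA), psi (s i) (vtx col T cB), psi (s i) (vtx col T cC), psi (s (Suc i)) (vtx col T cC), psi (s (Suc i)) (vtx col T cD)} \<or>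
      P = {psi (s i) (vtx col T cA), psi (s i) (vtx col T cB), psi (s (Suc i)) (vtx col T cB), psi (s (Suc i)) (vtx col T cC), psi (s (Suc i)) (vtx col T cD)} \<or>
      P = {psi (s i) (vtx col T cA), psi (s (Suc i)) (vtx col T cA), psi (s (Suc i)) (vtx col T cB), psi (s (Suc i)) (vtx col T cC), psi (s (Suc i)) (vtx col T cD)} \<or> False" by (rule bexE)
  from Ex obtain i where i1: "i \<in> {..<M}" and P: "P = {psi (s i) (vtx col T cA), psi (s i) (vtx col T cB), psi (s i) (vtx col T cC), psi (s i) (vtx col T cD), psi (s (Suc i)) (vtx col T cD)} \<or>
      P = {psi (s i) (vtx col T cA), psi (s i) (vtx col T cB), psi (s i) (vtx col T cC), psi (s (Suc i)) (vtx col T cC), psi (s (Suc i)) (vtx col T cD)} \<or>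
      P = {psi (s i) (vtx col T cA), psi (s i) (vtx col T cB), psi (s (Suc i)) (vtx col T cB), psi (s (Suc i)) (vtx col T cC), psi (s (Suc i)) (vtx col T cD)} \<or>
      P = {psi (s i) (vtx col T cA), psi (s (Suc i)) (vtx col T cA), psi (s (Suc i)) (vtx col T cB), psi (s (Suc i)) (vtx col T cC), psi (s (Suc i)) (vtx col T cD)} \<or> False" by (rule bexE)
  have Ti: "T \<in> Tm" "i < M" using T1 i1 by simp_all
  have w0: "set (win col s T (4*i + 0)) = {psi (s i) (vtx col T cA), psi (s i) (vtx col T cB), psi (s i) (vtx col T cC), psi (s i) (vtx col T cD), psi (s (Suc i)) (vtx col T cD)}"
    unfolding win4 wpt4 by auto
  have w1: "set (win col s T (4*i + 1)) = {psi (s i) (vtx col T cA), psi (s i) (vtx col T cB), psi (s i) (vtx col T cC), psi (s (Suc i)) (vtx col T cC), psi (s (Suc i)) (vtx col T cD)}"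
    unfolding win4 wpt4 by auto
  have w2: "set (win col s T (4*i + 2)) = {psi (s i) (vtx col T cA), psi (s i) (vtx col T cB), psi (s (Suc i)) (vtx col T cB), psi (s (Suc i)) (vtx col T cC), psi (s (Suc i)) (vtx col T cD)}"
    unfolding win4 wpt4 by auto
  have w3: "set (win col s T (4*i + 3)) = {psi (s i) (vtx col T cA), psi (s (Suc i)) (vtx col T cA), psi (s (Suc i)) (vtx col T cB), psi (s (Suc i)) (vtx col T cC), psi (s (Suc i)) (vtx col T cD)}"
    unfolding win4 wpt4 by auto
  have lt: "4*i + k < 4*M" if "k < 4" for k using Ti(2) that by linarith
  have P': "P = set (win col s T (4*i + 0)) \<or> P = set (win col s T (4*i + 1)) \<or>
     P = set (win col s T (4*i + 2)) \<or> P = set (win col s T (4*i + 3))"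
    using P
  proof (elim disjE)
    assume h: "P = {psi (s i) (vtx col T cA), psi (s i) (vtx col T cB), psi (s i) (vtx col T cC), psi (s i) (vtx col T cD), psi (s (Suc i)) (vtx col T cD)}"
    show ?thesis unfolding w0 by (rule disjI1[OF h])
  next
    assume h: "P = {psi (s i) (vtx col T cA), psi (s i) (vtx col T cB), psi (s i) (vtx col T cC), psi (s (Suc i)) (vtx col T cC), psi (s (Suc i)) (vtx col T cD)}"
    show ?thesis unfolding w1 by (rule disjI2[OF disjI1[OF h]])
  next
    assume h: "P = {psi (s i) (vtx col T cA), psi (s i) (vtx col T cB), psi (s (Suc i)) (vtx col T cB), psi (s (Suc i)) (vtx col T cC), psi (s (Suc i)) (vtx col T cD)}"
    show ?thesis unfolding w2 by (rule disjI2[OF disjI2[OF disjI1[OF h]]])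
  next
    assume h: "P = {psi (s i) (vtx col T cA), psi (s (Suc i)) (vtx col T cA), psi (s (Suc i)) (vtx col T cB), psi (s (Suc i)) (vtx col T cC), psi (s (Suc i)) (vtx col T cD)}"
    show ?thesis unfolding w3 by (rule disjI2[OF disjI2[OF disjI2[OF h]]])
  qed simp
  then show ?thesis
  proof (elim disjE)
    assume "P = set (win col s T (4*i + 0))"
    moreover have "4*i + 0 < 4*M" by (rule lt) simp
    ultimately show ?thesis using Ti(1) by blast
  next
    assume "P = set (win col s T (4*i + 1))"
    moreover have "4*i + 1 < 4*M" by (rule lt) simp
    ultimately show ?thesis using Ti(1) by blast
  next
    assume "P = set (win col s T (4*i + 2))"
    moreover have "4*i + 2 < 4*M" by (rule lt) simp
    ultimately show ?thesis using Ti(1) by blast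
  next
    assume "P = set (win col s T (4*i + 3))"
    moreover have "4*i + 3 < 4*M" by (rule lt) simp
    ultimately show ?thesis using Ti(1) by blast
  qed
qed

lemma lt5: "(j::nat) < 5 \<Longrightarrow> j = 0 \<or> j = 1 \<or> j = 2 \<or> j = 3 \<or> j = 4" by arith

lemma abo1: "a0 = b0 \<Longrightarrow> a2 = b2 \<Longrightarrow> a3 = b3 \<Longrightarrow> a4 = b4 \<Longrightarrow>
  agree_but_one [a0,a1,a2,a3,a4] [b0,b1,b2,b3,b4]"
  unfolding agree_but_one_def
  apply (intro conjI) apply simp apply (rule exI[of _ 1]) apply (intro conjI allI impI) apply simp
  subgoal for j using lt5[of j] by auto
  done
lemma abo2: "a0 = b0 \<Longrightarrow> a1 = b1 \<Longrightarrow> a3 = b3 \<Longrightarrow> a4 = b4 \<Longrightarrow>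
  agree_but_one [a0,a1,a2,a3,a4] [b0,b1,b2,b3,b4]"
  unfolding agree_but_one_def
  apply (intro conjI) apply simp apply (rule exI[of _ 2]) apply (intro conjI allI impI) apply simp
  subgoal for j using lt5[of j] by auto
  done
lemma abo3: "a0 = b0 \<Longrightarrow> a1 = b1 \<Longrightarrow> a2 = b2 \<Longrightarrow> a4 = b4 \<Longrightarrow>
  agree_but_one [a0,a1,a2,a3,a4] [b0,b1,b2,b3,b4]"
  unfolding agree_but_one_def
  apply (intro conjI) apply simp apply (rule exI[of _ 3]) apply (intro conjI allI impI) apply simp
  subgoal for j using lt5[of j] by auto
  done

lemma shift_ct:
  fixes a0 a1 a2 a3 a4 a5 :: pt4
  assumes d: "distinct [a0,a1,a2,a3,a4,a5]"
    and m: "(1/2) *\<^sub>R (a0 + a4) \<noteq> (1/2) *\<^sub>R (a1 + a5)"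
  shows "consistently_tagged ([a0,a1,a2,a3,a4],0) ([a1,a2,a3,a4,a5],0)"
    and "consistently_tagged ([a1,a2,a3,a4,a5],0) ([a0,a1,a2,a3,a4],0)"
proof -
  define m1 where "m1 = (1/2) *\<^sub>R (a0 + a4)"
  define m2 where "m2 = (1/2) *\<^sub>R (a1 + a5)"
  have F1: "set [a0,a1,a2,a3,a4] \<inter> set [a1,a2,a3,a4,a5] = {a1,a2,a3,a4}" using d by auto
  have F2: "set [a1,a2,a3,a4,a5] \<inter> set [a0,a1,a2,a3,a4] = {a1,a2,a3,a4}" using d by auto
  have c4: "card {a1,a2,a3,a4} = 4" using d by simp
  have M1: "set [a4, m1, a3, a2, a1] \<inter> set [a1, m2, a2, a3, a4] = {a1,a2,a3,a4}"
    using m unfolding m1_def m2_def by auto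
  have M2: "set [a1, m2, a2, a3, a4] \<inter> set [a4, m1, a3, a2, a1] = {a1,a2,a3,a4}"
    using m unfolding m1_def m2_def by auto
  have B1: "bisect_children ([a0,a1,a2,a3,a4],0) = {([a0,m1,a1,a2,a3],1), ([a4,m1,a3,a2,a1],1)}"
    unfolding bisect_children_def m1_def Let_def by simp
  have B2: "bisect_children ([a1,a2,a3,a4,a5],0) = {([a1,m2,a2,a3,a4],1), ([a5,m2,a4,a3,a2],1)}"
    unfolding bisect_children_def m2_def Let_def by simp
  have R1: "reflect ([a4, m1, a3, a2, a1],1) = ([a1, m1, a2, a3, a4], 1)" by (simp add: reflect_def)
  have R2: "reflect ([a1, m2, a2, a3, a4],1) = ([a4, m2, a3, a2, a1], 1)" by (simp add: reflect_def)
  have rn1: "reflected_neighbors ([a4, m1, a3, a2, a1],1) ([a1, m2, a2, a3, a4],1)"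
    unfolding reflected_neighbors_def share_hyperface_def using M1 c4 R1
    by (auto intro!: abo1)
  have rn2: "reflected_neighbors ([a1, m2, a2, a3, a4],1) ([a4, m1, a3, a2, a1],1)"
    unfolding reflected_neighbors_def share_hyperface_def using M2 c4 R2
    by (auto intro!: abo1)
  have n1: "\<not> ({a0, a4} \<subseteq> {a1,a2,a3,a4})" using d by auto
  have n2: "\<not> ({a1, a5} \<subseteq> {a1,a2,a3,a4})" using d by auto
  have sub1: "{a1,a2,a3,a4} \<subseteq> set (fst ([a4, m1, a3, a2, a1],1::nat))" by simp
  have sub2: "{a1,a2,a3,a4} \<subseteq> set (fst ([a1, m2, a2, a3, a4],1::nat))" by simp
  have if1: "\<not> ({[a0,a1,a2,a3,a4] ! 0, [a0,a1,a2,a3,a4] ! 4} \<subseteq> {a1,a2,a3,a4} \<or>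
      {[a1,a2,a3,a4,a5] ! 0, [a1,a2,a3,a4,a5] ! 4} \<subseteq> {a1,a2,a3,a4})" using n1 n2 by simp
  have if2: "\<not> ({[a1,a2,a3,a4,a5] ! 0, [a1,a2,a3,a4,a5] ! 4} \<subseteq> {a1,a2,a3,a4} \<or>
      {[a0,a1,a2,a3,a4] ! 0, [a0,a1,a2,a3,a4] ! 4} \<subseteq> {a1,a2,a3,a4})" using n1 n2 by simp
  show "consistently_tagged ([a0,a1,a2,a3,a4],0) ([a1,a2,a3,a4,a5],0)"
    unfolding consistently_tagged_def share_hyperface_def Let_def fst_conv snd_conv F1
    apply (intro conjI refl c4)
    apply (subst if_not_P[OF if1])
    apply (rule bexI[of _ "([a4, m1, a3, a2, a1],1)"])
     apply (rule bexI[of _ "([a1, m2, a2, a3, a4],1)"])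
      apply (intro conjI sub1 sub2 rn1)
    unfolding B1 B2 by simp_all
  show "consistently_tagged ([a1,a2,a3,a4,a5],0) ([a0,a1,a2,a3,a4],0)"
    unfolding consistently_tagged_def share_hyperface_def Let_def fst_conv snd_conv F2
    apply (intro conjI refl c4)
    apply (subst if_not_P[OF if2])
    apply (rule bexI[of _ "([a1, m2, a2, a3, a4],1)"])
     apply (rule bexI[of _ "([a4, m1, a3, a2, a1],1)"])
      apply (intro conjI sub1 sub2 rn2)
    unfolding B1 B2 by simp_all
qed

lemma same_ct:
  assumes "a0 = b0" "a4 = b4" "card (set [a0,a1,a2,a3,a4] \<inter> set [b0,b1,b2,b3,b4]) = 4"
    "(a2 = b2 \<and> a3 = b3) \<or> (a1 = b1 \<and> a3 = b3) \<or> (a1 = b1 \<and> a2 = b2)"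
  shows "consistently_tagged ([a0,a1,a2,a3,a4],0) ([b0,b1,b2,b3,b4],0)"
proof -
  have "{a0, a4} \<subseteq> set [a0,a1,a2,a3,a4] \<inter> set [b0,b1,b2,b3,b4]" using assms(1,2) by auto
  moreover have "agree_but_one [a0,a1,a2,a3,a4] [b0,b1,b2,b3,b4]"
    using assms(4)
  proof (elim disjE conjE)
    assume "a2 = b2" "a3 = b3" then show ?thesis by (intro abo1) (simp_all add: assms(1,2))
  next
    assume "a1 = b1" "a3 = b3" then show ?thesis by (intro abo2) (simp_all add: assms(1,2))
  next
    assume "a1 = b1" "a2 = b2" then show ?thesis by (intro abo3) (simp_all add: assms(1,2))
  qed
  ultimately have H: "{a0, a4} \<subseteq> set [a0,a1,a2,a3,a4] \<inter> set [b0,b1,b2,b3,b4]"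
    and rn: "reflected_neighbors ([a0,a1,a2,a3,a4],0) ([b0,b1,b2,b3,b4],0)"
    unfolding reflected_neighbors_def share_hyperface_def fst_conv snd_conv
    using assms(3) by simp_all
  show ?thesis
    unfolding consistently_tagged_def Let_def fst_conv snd_conv share_hyperface_def
    apply (intro conjI)
      apply (rule refl)
     apply (rule assms(3))
    using H rn by simp
qed


lemma range5: "{n..n+4} = {n, n+1, n+2, n+3, n+(4::nat)}"
  by auto

lemma set_win: "set (win col s T n) = wpt col s T ` {n..n+4}"
  unfolding range5 win_def by simp

lemma div_le: "j \<le> n + 4 \<Longrightarrow> n < 4 * M \<Longrightarrow> j div 4 \<le> (M::nat)"
  by presburger

lemma fst_wpt: "fst (wpt col s T j) = vtx col T (cidx j)"
  by (simp add: wpt_def psi_def)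

lemma shift_eq:
  assumes "\<forall>j. Suc n \<le> j \<and> j \<le> n + 4 \<longrightarrow> wpt col s Ta j = wpt col s Tb j"
  shows "wpt col s Ta = wpt col s Tb"
proof -
  have "vtx col Ta c = vtx col Tb c" for c
  proof -
    obtain j where j: "Suc n \<le> j" "j \<le> n + 4" "cidx j = c" using cidx_surj by blast
    have "fst (wpt col s Ta j) = fst (wpt col s Tb j)" using assms j by simp
    then show ?thesis using j by (simp add: fst_wpt)
  qed
  then show ?thesis by (intro ext) (simp add: wpt_def)
qed

lemma shift_win:
  assumes S: "\<forall>i<M. s i < s (Suc i)" and ga: "\<forall>c. col (vtx col Ta c) = c"
    and n: "Suc n < 4 * M"
  shows "consistently_tagged (win col s Ta n, 0) (win col s Ta (Suc n), 0)"
    and "consistently_tagged (win col s Ta (Suc n), 0) (win col s Ta n, 0)"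
proof -
  let ?w = "wpt col s Ta"
  have inj: "?w (n + i) = ?w (n + k) \<Longrightarrow> i \<le> 5 \<Longrightarrow> k \<le> 5 \<Longrightarrow> i = k" for i k
    using wpt_inj[OF S ga ga, of "n+i" "n+k"] div_le[of "n+i" "Suc n" M] div_le[of "n+k" "Suc n" M] n
    by simp
  have d: "distinct [?w n, ?w (n+1), ?w (n+2), ?w (n+3), ?w (n+4), ?w (n+5)]"
    using inj[of 0 1] inj[of 0 2] inj[of 0 3] inj[of 0 4] inj[of 0 5]
      inj[of 1 2] inj[of 1 3] inj[of 1 4] inj[of 1 5]
      inj[of 2 3] inj[of 2 4] inj[of 2 5] inj[of 3 4] inj[of 3 5] inj[of 4 5]
    by (auto simp del: One_nat_def)
  have half: "(1/2) *\<^sub>R (v + v) = (v::pt3)" for v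
  proof -
    have "v + v = 2 *\<^sub>R v" by (simp add: scaleR_2)
    then show ?thesis by simp
  qed
  have c5: "cidx (n+5) = cidx (Suc n)"
  proof -
    have "(n+5) mod 4 = Suc n mod 4" by presburger
    then show ?thesis by (simp only: cidx_def)
  qed
  have m: "(1/2) *\<^sub>R (?w n + ?w (n+4)) \<noteq> (1/2) *\<^sub>R (?w (n+1) + ?w (n+5))"
  proof
    assume "(1/2) *\<^sub>R (?w n + ?w (n+4)) = (1/2) *\<^sub>R (?w (n+1) + ?w (n+5))"
    then have "fst ((1/2) *\<^sub>R (?w n + ?w (n+4))) = fst ((1/2) *\<^sub>R (?w (n+1) + ?w (n+5)))" by simp
    then have "vtx col Ta (cidx n) = vtx col Ta (cidx (Suc n))"
      using cidx_add4[of n] c5 by (simp add: fst_wpt half)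
    then have "cidx n = cidx (Suc n)" using ga by metis
    then show False using cidx_Suc by metis
  qed
  have e1: "win col s Ta (Suc n) = [?w (n+1), ?w (n+2), ?w (n+3), ?w (n+4), ?w (n+5)]"
    by (simp add: win_def eval_nat_numeral)
  show "consistently_tagged (win col s Ta n, 0) (win col s Ta (Suc n), 0)"
    unfolding e1 unfolding win_def by (rule shift_ct(1)[OF d m])
  show "consistently_tagged (win col s Ta (Suc n), 0) (win col s Ta n, 0)"
    unfolding e1 unfolding win_def by (rule shift_ct(2)[OF d m])
qed


lemma main_ct:
  assumes S: "\<forall>i<M. s i < s (Suc i)" and ga: "\<forall>c. col (vtx col Ta c) = c"
    and gb: "\<forall>c. col (vtx col Tb c) = c"
    and na: "na < 4*M" and nb: "nb < 4*M"
    and ne: "set (win col s Ta na) \<noteq> set (win col s Tb nb)"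
    and c4: "card (set (win col s Ta na) \<inter> set (win col s Tb nb)) = 4"
  shows "consistently_tagged (win col s Ta na, 0) (win col s Tb nb, 0)"
proof -
  let ?wa = "wpt col s Ta" and ?wb = "wpt col s Tb"
  define K where "K = {j. na \<le> j \<and> j \<le> na+4 \<and> nb \<le> j \<and> j \<le> nb+4 \<and> ?wa j = ?wb j}"
  have sub: "set (win col s Ta na) \<inter> set (win col s Tb nb) \<subseteq> ?wa ` K"
  proof
    fix x assume "x \<in> set (win col s Ta na) \<inter> set (win col s Tb nb)"
    then obtain j j' where j: "na \<le> j" "j \<le> na+4" "x = ?wa j"
      and j': "nb \<le> j'" "j' \<le> nb+4" "x = ?wb j'"
      by (auto simp: set_win)
    have "j = j'" using wpt_inj[OF S ga gb, of j j'] j j' div_le[OF j(2) na] div_le[OF j'(2) nb] by auto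
    then have "j \<in> K" using j j' unfolding K_def by auto
    then show "x \<in> ?wa ` K" unfolding j(3) by (rule imageI)
  qed
  have Kmem: "j \<in> K \<longleftrightarrow> na \<le> j \<and> j \<le> na+4 \<and> nb \<le> j \<and> j \<le> nb+4 \<and> ?wa j = ?wb j" for j
    unfolding K_def by simp
  have finK: "finite K" by (rule finite_subset[of _ "{na..na+4}"]) (auto simp: K_def)
  have cK: "4 \<le> card K"
    using c4 card_mono[OF finite_imageI[OF finK] sub] card_image_le[OF finK, of ?wa] by linarith
  consider "nb = na" | "nb = Suc na" | "na = Suc nb" | "nb + 2 \<le> na" | "na + 2 \<le> nb" by linarith
  then show ?thesis
  proof cases
    case 4
    then have "K \<subseteq> {na..nb+4}" unfolding K_def by auto
    from card_mono[OF _ this] have "card K \<le> card {na..nb+4}" by simp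
    then show ?thesis using cK 4 by simp
  next
    case 5
    then have "K \<subseteq> {nb..na+4}" unfolding K_def by auto
    from card_mono[OF _ this] have "card K \<le> card {nb..na+4}" by simp
    then show ?thesis using cK 5 by simp
  next
    case 2
    have Ks: "K \<subseteq> {Suc na..na+4}" unfolding K_def using 2 by auto
    have "card {Suc na..na+4} = 4" by simp
    then have KE: "K = {Suc na..na+4}" using card_subset_eq[OF _ Ks] cK card_mono[OF _ Ks] by simp
    have "\<forall>j. Suc na \<le> j \<and> j \<le> na + 4 \<longrightarrow> ?wa j = ?wb j"
    proof (intro allI impI)
      fix j assume "Suc na \<le> j \<and> j \<le> na + 4"
      then have "j \<in> K" using KE by simp
      then show "?wa j = ?wb j" by (simp add: Kmem)
    qed
    then have "?wa = ?wb" by (rule shift_eq)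
    then have "win col s Tb nb = win col s Ta nb" by (simp add: win_def)
    then show ?thesis using shift_win(1)[OF S ga, of na] nb 2 by simp
  next
    case 3
    have Ks: "K \<subseteq> {Suc nb..nb+4}" unfolding K_def using 3 by auto
    have "card {Suc nb..nb+4} = 4" by simp
    then have KE: "K = {Suc nb..nb+4}" using card_subset_eq[OF _ Ks] cK card_mono[OF _ Ks] by simp
    have "\<forall>j. Suc nb \<le> j \<and> j \<le> nb + 4 \<longrightarrow> ?wa j = ?wb j"
    proof (intro allI impI)
      fix j assume "Suc nb \<le> j \<and> j \<le> nb + 4"
      then have "j \<in> K" using KE by simp
      then show "?wa j = ?wb j" by (simp add: Kmem)
    qed
    then have "?wa = ?wb" by (rule shift_eq)
    then have "win col s Tb nb = win col s Ta nb" by (simp add: win_def)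
    then show ?thesis using shift_win(2)[OF S ga, of nb] na 3 by simp
  next
    case 1
    let ?n = na
    have Ks: "K \<subseteq> {na..na+4}" by (auto simp: Kmem)
    have notall: "\<not> {na..na+4} \<subseteq> K"
    proof
      assume "{na..na+4} \<subseteq> K"
      then have "\<forall>j. na \<le> j \<and> j \<le> na + 4 \<longrightarrow> ?wa j = ?wb j" by (auto simp: Kmem)
      then have "win col s Ta na = win col s Tb nb" using 1 unfolding win_def by simp
      then show False using ne by simp
    qed
    then obtain i where iK: "i \<in> {na..na+4}" "i \<notin> K" by blast
    then have i: "na \<le> i" "i \<le> na + 4" "i \<notin> K" by simp_all
    have Ks2: "K \<subseteq> {na..na+4} - {i}" using Ks i(3) by blast
    have "card ({na..na+4} - {i}) = 4" using i by simp
    then have KK: "K = {na..na+4} - {i}" using card_subset_eq[OF _ Ks2] cK card_mono[OF _ Ks2] by simp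
    have eqv: "?wa j = ?wb j" if "na \<le> j" "j \<le> na + 4" "j \<noteq> i" for j
    proof -
      have "j \<in> K" using that KK by simp
      then show ?thesis by (simp add: Kmem)
    qed
    have sw: "?wa j = ?wb j" if "?wa (j+4) = ?wb (j+4)" for j
    proof -
      have "fst (?wa (j+4)) = fst (?wb (j+4))" using that by simp
      then have "vtx col Ta (cidx j) = vtx col Tb (cidx j)" by (simp add: fst_wpt cidx_add4)
      then show ?thesis by (simp add: wpt_def)
    qed
    have sw2: "?wa (j+4) = ?wb (j+4)" if "?wa j = ?wb j" for j
    proof -
      have "fst (?wa j) = fst (?wb j)" using that by simp
      then have "vtx col Ta (cidx (j+4)) = vtx col Tb (cidx (j+4))" by (simp add: fst_wpt cidx_add4)
      then show ?thesis by (simp add: wpt_def)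
    qed
    have i0: "i \<noteq> na"
    proof
      assume "i = na"
      then have "?wa (na+4) = ?wb (na+4)" using eqv[of "na+4"] by simp
      then have "?wa na = ?wb na" by (rule sw)
      then have "na \<in> K" using 1 by (simp add: Kmem)
      then show False using i(3) \<open>i = na\<close> by simp
    qed
    have i4: "i \<noteq> na + 4"
    proof
      assume "i = na + 4"
      then have "?wa na = ?wb na" using eqv[of na] by simp
      then have "?wa (na+4) = ?wb (na+4)" by (rule sw2)
      then have "na + 4 \<in> K" using 1 by (simp add: Kmem)
      then show False using i(3) \<open>i = na + 4\<close> by simp
    qed
    have e0: "?wa na = ?wb na" using eqv[of na] i0 by simp
    have e4: "?wa (na+4) = ?wb (na+4)" using eqv[of "na+4"] i4 by simp
    have mid: "(?wa (na+2) = ?wb (na+2) \<and> ?wa (na+3) = ?wb (na+3)) \<or>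
      (?wa (na+1) = ?wb (na+1) \<and> ?wa (na+3) = ?wb (na+3)) \<or>
      (?wa (na+1) = ?wb (na+1) \<and> ?wa (na+2) = ?wb (na+2))"
    proof -
      have "i = na + 1 \<or> i = na + 2 \<or> i = na + 3" using i i0 i4 by linarith
      then show ?thesis using eqv[of "na+1"] eqv[of "na+2"] eqv[of "na+3"] by auto
    qed
    show ?thesis
      unfolding win_def 1
      apply (rule same_ct[OF e0 e4 _ mid])
      using c4 unfolding win_def 1 .
  qed
qed

definition tg_of :: "pt3 set set \<Rightarrow> (pt3 \<Rightarrow> colour) \<Rightarrow> (nat \<Rightarrow> real) \<Rightarrow> nat \<Rightarrow> pt4 set \<Rightarrow> tagged" where
  "tg_of Tm col s M P = (SOME t. \<exists>T\<in>Tm. \<exists>n<4*M. P = set (win col s T n) \<and> t = (win col s T n, 0))"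

lemma tg_of_prop:
  assumes "P \<in> extrusion_subdivision Tm col s M"
  shows "\<exists>T\<in>Tm. \<exists>n<4*M. P = set (win col s T n) \<and> tg_of Tm col s M P = (win col s T n, 0)"
proof -
  have "\<exists>t. \<exists>T\<in>Tm. \<exists>n<4*M. P = set (win col s T n) \<and> t = (win col s T n, 0)"
    using mesh_win[OF assms] by blast
  from someI_ex[OF this] show ?thesis unfolding tg_of_def by blast
qed

theorem proposition1:
  fixes Tm :: "pt3 set set" and col :: "pt3 \<Rightarrow> colour"
    and s :: "nat \<Rightarrow> real" and M :: nat
  assumes "conforming_tet_mesh Tm"
    and "four_colouring Tm col"
    and "\<forall>i<M. s i < s (Suc i)"
  shows "\<exists>tg. consistent_tagging (extrusion_subdivision Tm col s M) tg"
proof (intro exI[of _ "tg_of Tm col s M"])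
  have good: "\<forall>c. col (vtx col T c) = c" if "T \<in> Tm" for T
    using vtx_props[OF assms(1,2) that] by blast
  show "consistent_tagging (extrusion_subdivision Tm col s M) (tg_of Tm col s M)"
    unfolding consistent_tagging_def
  proof (intro conjI ballI impI)
    fix P assume P: "P \<in> extrusion_subdivision Tm col s M"
    then obtain T n where T: "T \<in> Tm" "n < 4*M" "P = set (win col s T n)"
      "tg_of Tm col s M P = (win col s T n, 0)" using tg_of_prop by blast
    let ?w = "wpt col s T"
    have inj: "?w (n + i) = ?w (n + k) \<Longrightarrow> i \<le> 4 \<Longrightarrow> k \<le> 4 \<Longrightarrow> i = k" for i k
      using wpt_inj[OF assms(3) good[OF T(1)] good[OF T(1)], of "n+i" "n+k"]
        div_le[of "n+i" n M] div_le[of "n+k" n M] T(2)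
      by simp
    have d: "distinct (win col s T n)"
      unfolding win_def
      using inj[of 0 1] inj[of 0 2] inj[of 0 3] inj[of 0 4]
        inj[of 1 2] inj[of 1 3] inj[of 1 4] inj[of 2 3] inj[of 2 4] inj[of 3 4]
      by (auto simp del: One_nat_def)
    show "is_tag P (tg_of Tm col s M P)"
      unfolding is_tag_def T(4) using d T(3) by (simp add: win_def)
  next
    fix P Q assume P: "P \<in> extrusion_subdivision Tm col s M" and Q: "Q \<in> extrusion_subdivision Tm col s M"
      and PQ: "P \<noteq> Q \<and> card (P \<inter> Q) = 4"
    obtain T n where T: "T \<in> Tm" "n < 4*M" "P = set (win col s T n)"
      "tg_of Tm col s M P = (win col s T n, 0)" using tg_of_prop[OF P] by blast
    obtain T' n' where T': "T' \<in> Tm" "n' < 4*M" "Q = set (win col s T' n')"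
      "tg_of Tm col s M Q = (win col s T' n', 0)" using tg_of_prop[OF Q] by blast
    show "consistently_tagged (tg_of Tm col s M P) (tg_of Tm col s M Q)"
      unfolding T(4) T'(4)
      by (rule main_ct[OF assms(3) good[OF T(1)] good[OF T'(1)] T(2) T'(2)]) (use PQ T(3) T'(3) in auto)
  qed
qed

end
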